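(* Let $K\subset L\subset\mathbb{R}^2$ be convex compact sets with $\operatorname{vol}L>0$. Then for every unit vector $\bm u\in\mathbb{R}^2$, $$\frac{\operatorname{vol}P_{\bm u}K}{\operatorname{vol}P_{\bm u}L}\ \ge\ 1-\sqrt{1-\frac{\operatorname{vol}K}{\operatorname{vol}L}}.$$ The bound is tight: for every value $r\in[0,1]$ there exist such $K\subset L$ with $\operatorname{vol}K/\operatorname{vol}L=r$ and a direction $\bm u$ attaining equality.
   Context: $P_{\bm u}$ is the orthogonal projection onto the line orthogonal to $\bm u$; $\operatorname{vol}$ denotes area for subsets of $\mathbb{R}^2$ and length for subsets of a line. *)

theory Defs
  imports "HOL-Analysis.Analysis"
begin

definition proj_perp :: "real^2 \<Rightarrow> real^2 \<Rightarrow> real^2" where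
  "proj_perp u x = x - (x \<bullet> u) *\<^sub>R u"

definition perp_dir :: "real^2 \<Rightarrow> real^2" where
  "perp_dir u = vector [- (u$2), u$1]"

text \<open>Length (1-dimensional volume) of a subset S of the line orthogonal to the unit
  vector u: Lebesgue measure of its preimage under the isometric parametrisation
  t \<mapsto> t * perp_dir u of that line.\<close>
definition line_vol :: "real^2 \<Rightarrow> (real^2) set \<Rightarrow> real" where
  "line_vol u S = measure lebesgue {t::real. t *\<^sub>R perp_dir u \<in> S}"

end

theory Submission
  imports Defs
begin

lemma proj_lin:
  fixes u x :: "real^2" assumes "norm u = 1"
  shows "proj_perp u x = (x \<bullet> perp_dir u) *\<^sub>R perp_dir u"
proof -
  have e: "u$1*u$1 + u$2*u$2 = 1" using assms by (simp add: norm_eq_1 inner_vec_def sum_2)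
  have h1: "x$1 = x$1*(u$1*u$1) + x$1*(u$2*u$2)" using e by (metis distrib_left mult_1_right)
  have h2: "x$2 = x$2*(u$1*u$1) + x$2*(u$2*u$2)" using e by (metis distrib_left mult_1_right)
  show ?thesis
    unfolding proj_perp_def perp_dir_def
    using h1 h2 by (simp add: vec_eq_iff forall_2 inner_vec_def sum_2 algebra_simps)
qed

lemma perp_norm: fixes u :: "real^2" assumes "norm u = 1" shows "norm (perp_dir u) = 1"
  using assms by (simp add: norm_eq_1 inner_vec_def sum_2 perp_dir_def)

lemma line_vol_img:
  fixes u :: "real^2" assumes "norm u = 1"
  shows "line_vol u (proj_perp u ` K) = measure lebesgue ((\<lambda>x. x \<bullet> perp_dir u) ` K)"
proof -
  have nz: "perp_dir u \<noteq> 0" using perp_norm[OF assms] by auto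
  have "{t. t *\<^sub>R perp_dir u \<in> proj_perp u ` K} = (\<lambda>x. x \<bullet> perp_dir u) ` K"
    using nz by (auto simp: proj_lin[OF assms] image_iff)
  then show ?thesis by (simp add: line_vol_def)
qed

lemma interval_img:
  fixes K :: "(real^2) set"
  assumes "compact K" "convex K" "K \<noteq> {}"
  shows "\<exists>p\<in>K. \<exists>q\<in>K. (\<forall>x\<in>K. p \<bullet> w \<le> x \<bullet> w \<and> x \<bullet> w \<le> q \<bullet> w) \<and>
           measure lebesgue ((\<lambda>x. x \<bullet> w) ` K) = q \<bullet> w - p \<bullet> w"
proof -
  let ?S = "(\<lambda>x. x \<bullet> w) ` K"
  have c: "compact ?S" using assms(1) by (intro compact_continuous_image continuous_intros)
  have cv: "convex ?S" by (rule convex_linear_image[OF bounded_linear.linear[OF bounded_linear_inner_left] assms(2)])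
  then have "connected ?S" by (simp add: convex_connected)
  then obtain a b where ab: "?S = {a..b}" using c connected_compact_interval_1 by blast
  then have "a \<le> b" using assms(3) by (metis atLeastatMost_empty_iff image_is_empty)
  then have "a \<in> ?S" "b \<in> ?S" using ab by auto
  then obtain p q where pq: "p \<in> K" "q \<in> K" "a = p \<bullet> w" "b = q \<bullet> w" by auto
  show ?thesis
    apply (rule bexI[OF _ pq(1)], rule bexI[OF _ pq(2)])
    using ab pq \<open>a \<le> b\<close> by (auto simp: image_iff)
qed

lemma part1:
  fixes K L :: "(real^2) set" and u :: "real^2"
  assumes K: "convex K" "compact K" and L: "convex L" "compact L" and KL: "K \<subseteq> L"
    and V: "measure lebesgue L > 0" and u: "norm u = 1"
  shows "line_vol u (proj_perp u ` K) / line_vol u (proj_perp u ` L)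
              \<ge> 1 - sqrt (1 - measure lebesgue K / measure lebesgue L)"
proof (cases "K = {}")
  case True
  then show ?thesis by (simp add: line_vol_def)
next
  case False
  define v where "v = perp_dir u"
  have v0: "v \<noteq> 0" using perp_norm[OF u] by (auto simp: v_def)
  define W where "W = measure lebesgue K"
  define VL where "VL = measure lebesgue L"
  have Lm: "L \<in> lmeasurable" using L(2) by (rule lmeasurable_compact)
  have Km: "K \<in> lmeasurable" using K(2) by (rule lmeasurable_compact)
  have WV: "W \<le> VL" unfolding W_def VL_def using KL Lm Km by (intro measure_mono_fmeasurable) auto
  have W0: "0 \<le> W" by (simp add: W_def)
  obtain p0 q0 where pq0: "p0 \<in> K" "q0 \<in> K" "\<forall>x\<in>K. p0 \<bullet> v \<le> x \<bullet> v \<and> x \<bullet> v \<le> q0 \<bullet> v"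
     "measure lebesgue ((\<lambda>x. x \<bullet> v) ` K) = q0 \<bullet> v - p0 \<bullet> v"
    using interval_img[OF K(2) K(1) False] by blast
  have "L \<noteq> {}" using False KL by auto
  then obtain p q where pq: "p \<in> L" "q \<in> L" "\<forall>x\<in>L. p \<bullet> v \<le> x \<bullet> v \<and> x \<bullet> v \<le> q \<bullet> v"
     "measure lebesgue ((\<lambda>x. x \<bullet> v) ` L) = q \<bullet> v - p \<bullet> v"
    using interval_img[OF L(2) L(1)] by blast
  define a where "a = p0 \<bullet> v"
  define b where "b = q0 \<bullet> v"
  define \<alpha> where "\<alpha> = p \<bullet> v"
  define \<beta> where "\<beta> = q \<bullet> v"
  have ab: "a \<le> b" using pq0 by (auto simp: a_def b_def)
  have aa: "\<alpha> \<le> a" "b \<le> \<beta>" using pq(3) pq0(1,2) KL by (auto simp: a_def b_def \<alpha>_def \<beta>_def)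
  have Kab: "\<forall>x\<in>K. a \<le> x \<bullet> v \<and> x \<bullet> v \<le> b" using pq0 by (auto simp: a_def b_def)
  have LHS: "line_vol u (proj_perp u ` K) / line_vol u (proj_perp u ` L) = (b - a) / (\<beta> - \<alpha>)"
    using pq0(4) pq(4) by (simp add: line_vol_img[OF u] v_def a_def b_def \<alpha>_def \<beta>_def)
  have lpos: "\<alpha> < \<beta>"
  proof (rule ccontr)
    assume "\<not> \<alpha> < \<beta>"
    then have "L \<subseteq> {x. v \<bullet> x = \<alpha>}" using pq(3) by (force simp: \<alpha>_def \<beta>_def inner_commute)
    then have "negligible L" using negligible_hyperplane[of v \<alpha>] v0 negligible_subset by blast
    then show False using V negligible_imp_measure0 by force
  qed
  define ell where "ell = \<beta> - \<alpha>"
  have lp: "ell > 0" using lpos by (simp add: ell_def)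
  define lam where "lam = ((a - \<alpha>) + (\<beta> - b)) / ell"
  have l0: "0 \<le> lam" using aa lp by (simp add: lam_def)
  have l1: "lam \<le> 1" using aa ab lp by (simp add: lam_def ell_def divide_le_eq)
  have lhs_eq: "(b - a) / (\<beta> - \<alpha>) = 1 - lam"
    using lp by (simp add: lam_def ell_def field_simps)
  have key: "W + lam^2 * VL \<le> VL"
  proof (cases "lam = 0")
    case True then show ?thesis using WV by simp
  next
    case False
    then have lpos': "lam > 0" using l0 by simp
    define t0 where "t0 = \<alpha> + (a - \<alpha>) / lam"
    define L1 where "L1 = L \<inter> {x. x \<bullet> v \<le> t0}"
    define L2 where "L2 = L \<inter> {x. t0 \<le> x \<bullet> v}"
    define H1 where "H1 = (\<lambda>x. lam *\<^sub>R x + (1 - lam) *\<^sub>R p) ` L1"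
    define H2 where "H2 = (\<lambda>x. lam *\<^sub>R x + (1 - lam) *\<^sub>R q) ` L2"
    have cL1: "compact L1" unfolding L1_def
      by (intro compact_Int_closed L(2) closed_Collect_le continuous_intros)
    have cL2: "compact L2" unfolding L2_def
      by (intro compact_Int_closed L(2) closed_Collect_le continuous_intros)
    have cH1: "compact H1" unfolding H1_def
      by (intro compact_continuous_image cL1 continuous_intros)
    have cH2: "compact H2" unfolding H2_def
      by (intro compact_continuous_image cL2 continuous_intros)
    have mH1: "measure lebesgue H1 = lam^2 * measure lebesgue L1"
      unfolding H1_def using measure_lebesgue_affine[of lam "(1 - lam) *\<^sub>R p" L1] l0 by simp
    have mH2: "measure lebesgue H2 = lam^2 * measure lebesgue L2"
      unfolding H2_def using measure_lebesgue_affine[of lam "(1 - lam) *\<^sub>R q" L2] l0 by simp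
    have "L1 \<union> L2 = L" by (auto simp: L1_def L2_def)
    then have mL: "VL \<le> measure lebesgue L1 + measure lebesgue L2"
      unfolding VL_def using measure_Un_le[of L1 lebesgue L2] cL1 cL2
      by (metis fmeasurableD lmeasurable_compact)
    have e1: "lam * ell = (a - \<alpha>) + (\<beta> - b)" using lp by (simp add: lam_def)
    have e2: "lam * t0 = lam * \<alpha> + (a - \<alpha>)" using lpos' by (simp add: t0_def distrib_left)
    have e3: "lam * ell = lam * \<beta> - lam * \<alpha>" by (simp add: ell_def algebra_simps)
    have e4: "lam * t0 + (1 - lam) * \<beta> = lam * t0 + \<beta> - lam * \<beta>" by (simp add: algebra_simps)
    have t1: "lam * t0 + (1 - lam) * \<alpha> = a" using e2 by (simp add: algebra_simps)
    have t2: "lam * t0 + (1 - lam) * \<beta> = b" using e1 e2 e3 e4 by linarith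
    have H1a: "\<forall>y\<in>H1. y \<bullet> v \<le> a"
    proof
      fix y assume "y \<in> H1"
      then obtain x where x: "x \<in> L1" "y = lam *\<^sub>R x + (1 - lam) *\<^sub>R p" by (auto simp: H1_def)
      have "lam * (x \<bullet> v) \<le> lam * t0" using x lpos' by (simp add: L1_def)
      then show "y \<bullet> v \<le> a" using x t1 by (simp add: inner_add_left \<alpha>_def)
    qed
    have H2b: "\<forall>y\<in>H2. b \<le> y \<bullet> v"
    proof
      fix y assume "y \<in> H2"
      then obtain x where x: "x \<in> L2" "y = lam *\<^sub>R x + (1 - lam) *\<^sub>R q" by (auto simp: H2_def)
      have "lam * t0 \<le> lam * (x \<bullet> v)" using x lpos' by (simp add: L2_def)
      then show "b \<le> y \<bullet> v" using x t2 by (simp add: inner_add_left \<beta>_def)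
    qed
    have H1L: "H1 \<subseteq> L" unfolding H1_def L1_def using L(1) pq(1) l0 l1
      by (auto intro!: convexD)
    have H2L: "H2 \<subseteq> L" unfolding H2_def L2_def using L(1) pq(2) l0 l1
      by (auto intro!: convexD)
    have n1: "negligible (H1 \<inter> H2)"
      by (rule negligible_subset[OF negligible_hyperplane[of v a]])
         (use v0 H1a H2b ab in \<open>force simp: inner_commute\<close>)+
    have n2: "negligible (H1 \<inter> K)"
      by (rule negligible_subset[OF negligible_hyperplane[of v a]])
         (use v0 H1a Kab in \<open>force simp: inner_commute\<close>)+
    have n3: "negligible (H2 \<inter> K)"
      by (rule negligible_subset[OF negligible_hyperplane[of v b]])
         (use v0 H2b Kab in \<open>force simp: inner_commute\<close>)+
    have "measure lebesgue (H1 \<union> H2 \<union> K) = measure lebesgue H1 + measure lebesgue H2 + W"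
      unfolding W_def
      by (rule measure_Un3_negligible) (use cH1 cH2 Km n1 n2 n3 lmeasurable_compact in auto)
    moreover have "measure lebesgue (H1 \<union> H2 \<union> K) \<le> VL"
      unfolding VL_def using H1L H2L KL Lm cH1 cH2 Km
      by (intro measure_mono_fmeasurable) (auto intro: fmeasurableD lmeasurable_compact)
    ultimately show ?thesis using mH1 mH2 mL l0
      by (smt (verit) mult_left_mono zero_le_power2 distrib_left)
  qed
  have VLp: "VL > 0" using V by (simp add: VL_def)
  have "lam^2 \<le> 1 - W / VL" using key VLp by (simp add: field_simps)
  then have "lam \<le> sqrt (1 - W / VL)" using l0 by (metis real_le_rsqrt)
  then show ?thesis using LHS lhs_eq by (simp add: W_def VL_def)
qed

lemma part2:
  fixes r :: real assumes r: "0 \<le> r" "r \<le> 1"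
  shows "\<exists>(K::(real^2) set) L u.
               convex K \<and> compact K \<and> convex L \<and> compact L \<and> K \<subseteq> L \<and>
               measure lebesgue L > 0 \<and> norm u = 1 \<and>
               measure lebesgue K / measure lebesgue L = r \<and>
               line_vol u (proj_perp u ` K) / line_vol u (proj_perp u ` L)
                 = 1 - sqrt (1 - measure lebesgue K / measure lebesgue L)"
proof -
  define s where "s = sqrt (1 - r)"
  have s0: "0 \<le> s" "s \<le> 1" using r by (auto simp: s_def)
  have s2: "s^2 = 1 - r" using r by (simp add: s_def)
  define L :: "(real^2) set" where "L = {x. 0 \<le> x$2 \<and> x$2 \<le> x$1 \<and> x$1 \<le> 1}"
  define K :: "(real^2) set" where "K = {x. 0 \<le> x$2 \<and> x$2 \<le> x$1 \<and> x$1 \<le> 1 \<and> s \<le> x$1}"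
  define Ls :: "(real^2) set" where "Ls = {x. 0 \<le> x$2 \<and> x$2 \<le> x$1 \<and> x$1 \<le> s}"
  define u :: "real^2" where "u = vector [0, 1]"
  have u: "norm u = 1" by (simp add: u_def norm_eq_1 inner_vec_def sum_2)
  have ip: "x \<bullet> perp_dir u = - (x$1)" for x :: "real^2"
    by (simp add: u_def perp_dir_def inner_vec_def sum_2)
  have cvx: "convex {x::real^2. 0 \<le> x$2 \<and> x$2 \<le> x$1 \<and> x$1 \<le> c \<and> d \<le> x$1}" for c d
  proof (rule convexI)
    fix x y :: "real^2" and a b :: real
    assume x: "x \<in> {x. 0 \<le> x$2 \<and> x$2 \<le> x$1 \<and> x$1 \<le> c \<and> d \<le> x$1}"
      and y: "y \<in> {x. 0 \<le> x$2 \<and> x$2 \<le> x$1 \<and> x$1 \<le> c \<and> d \<le> x$1}"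
      and ab: "0 \<le> a" "0 \<le> b" "a + b = 1"
    have "a * x$2 \<le> a * x$1" "b * y$2 \<le> b * y$1" "a * x$1 \<le> a * c" "b * y$1 \<le> b * c"
      "a * d \<le> a * x$1" "b * d \<le> b * y$1" "0 \<le> a * x$2" "0 \<le> b * y$2"
      using x y ab by (auto intro: mult_left_mono)
    moreover have "a * c + b * c = c" "a * d + b * d = d" using ab by (metis distrib_right mult_1)+
    ultimately show "a *\<^sub>R x + b *\<^sub>R y \<in> {x. 0 \<le> x$2 \<and> x$2 \<le> x$1 \<and> x$1 \<le> c \<and> d \<le> x$1}"
      by simp
  qed
  have cmp: "compact {x::real^2. 0 \<le> x$2 \<and> x$2 \<le> x$1 \<and> x$1 \<le> c \<and> d \<le> x$1}" for c d
  proof -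
    have C: "closed {x::real^2. 0 \<le> x$2 \<and> x$2 \<le> x$1 \<and> x$1 \<le> c \<and> d \<le> x$1}"
      by (intro closed_Collect_conj closed_Collect_le continuous_intros)
    have "{x::real^2. 0 \<le> x$2 \<and> x$2 \<le> x$1 \<and> x$1 \<le> c \<and> d \<le> x$1} \<subseteq> cball 0 (2 * \<bar>c\<bar>)"
    proof
      fix x :: "real^2" assume "x \<in> {x::real^2. 0 \<le> x$2 \<and> x$2 \<le> x$1 \<and> x$1 \<le> c \<and> d \<le> x$1}"
      then have h: "0 \<le> x$2" "x$2 \<le> x$1" "x$1 \<le> c" by auto
      have "norm x \<le> (\<Sum>i\<in>UNIV. \<bar>x$i\<bar>)" by (rule norm_le_l1_cart)
      also have "\<dots> \<le> 2 * \<bar>c\<bar>" using h by (simp add: sum_2)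
      finally show "x \<in> cball 0 (2 * \<bar>c\<bar>)" by simp
    qed
    then have "bounded {x::real^2. 0 \<le> x$2 \<and> x$2 \<le> x$1 \<and> x$1 \<le> c \<and> d \<le> x$1}"
      using bounded_cball bounded_subset by blast
    then show ?thesis using C compact_eq_bounded_closed by blast
  qed
  have LL: "L = {x::real^2. 0 \<le> x$2 \<and> x$2 \<le> x$1 \<and> x$1 \<le> 1 \<and> 0 \<le> x$1}"
    by (auto simp: L_def)
  have LsL: "Ls = {x::real^2. 0 \<le> x$2 \<and> x$2 \<le> x$1 \<and> x$1 \<le> s \<and> 0 \<le> x$1}"
    by (auto simp: Ls_def)
  have cL: "convex L" "compact L" unfolding LL using cvx cmp by auto
  have cK: "convex K" "compact K" unfolding K_def using cvx cmp by auto
  have cLs: "compact Ls" unfolding LsL using cmp by auto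
  have KL: "K \<subseteq> L" by (auto simp: K_def L_def)
  have Lm: "L \<in> lmeasurable" "K \<in> lmeasurable" "Ls \<in> lmeasurable"
    using cL cK cLs lmeasurable_compact by auto
  have ballL: "ball (vector [2/3, 1/3]) (1/10) \<subseteq> L"
  proof
    fix x :: "real^2" assume "x \<in> ball (vector [2/3, 1/3]) (1/10)"
    then have d: "dist (vector [2/3, 1/3]) x < 1/10" by simp
    have "\<bar>(vector [2/3, 1/3] :: real^2)$i - x$i\<bar> < 1/10" for i
      using d component_le_norm_cart[of "vector [2/3, 1/3] - x" i] by (simp add: dist_norm)
    then have h: "\<bar>2/3 - x$1\<bar> < 1/10" "\<bar>1/3 - x$2\<bar> < 1/10"
      by (metis vector_2(1), metis vector_2(2))
    from h show "x \<in> L" unfolding L_def abs_less_iff by auto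
  qed
  have Vpos: "measure lebesgue L > 0"
  proof -
    have "0 < measure lborel (ball (vector [2/3, 1/3] :: real^2) (1/10))" using content_ball_pos[of "1/10" "vector [2/3, 1/3] :: real^2"] by simp
    also have "measure lborel (ball (vector [2/3, 1/3] :: real^2) (1/10)) = measure lebesgue (ball (vector [2/3, 1/3] :: real^2) (1/10))"
      by (simp add: measure_completion)
    also have "\<dots> \<le> measure lebesgue L"
      using ballL Lm by (intro measure_mono_fmeasurable) auto
    finally show ?thesis .
  qed
  have img: "(\<lambda>x. s *\<^sub>R x + 0) ` L = Ls"
  proof
    show "(\<lambda>x. s *\<^sub>R x + 0) ` L \<subseteq> Ls"
    proof
      fix y assume "y \<in> (\<lambda>x. s *\<^sub>R x + 0) ` L"
      then obtain x where x: "x \<in> L" "y = s *\<^sub>R x" by auto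
      have "s * x$2 \<le> s * x$1" "s * x$1 \<le> s" "0 \<le> s * x$2"
        using x s0 by (auto simp: L_def intro: mult_left_mono mult_left_le)
      then show "y \<in> Ls" using x by (simp add: Ls_def)
    qed
    show "Ls \<subseteq> (\<lambda>x. s *\<^sub>R x + 0) ` L"
    proof
      fix y assume y: "y \<in> Ls"
      show "y \<in> (\<lambda>x. s *\<^sub>R x + 0) ` L"
      proof (cases "s = 0")
        case True
        then have "y = 0" using y by (auto simp: Ls_def vec_eq_iff forall_2)
        moreover have "(0::real^2) \<in> L" by (simp add: L_def)
        ultimately show ?thesis using True by (auto simp: image_iff)
      next
        case False
        then have sp: "s > 0" using s0 by simp
        have "(1/s) *\<^sub>R y \<in> L" using y sp by (auto simp: Ls_def L_def divide_simps)
        moreover have "y = s *\<^sub>R ((1/s) *\<^sub>R y) + 0" using sp by simp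
        ultimately show ?thesis by blast
      qed
    qed
  qed
  have mLs: "measure lebesgue Ls = s^2 * measure lebesgue L"
    using measure_lebesgue_affine[of s 0 L] s0 img by simp
  have negI: "negligible (K \<inter> Ls)"
  proof (rule negligible_subset[OF negligible_hyperplane[of "axis 1 1 :: real^2" s]])
    show "K \<inter> Ls \<subseteq> {x. axis 1 1 \<bullet> x = s}" by (auto simp: K_def Ls_def inner_axis')
  qed (simp add: axis_eq_0_iff)
  have "K \<union> Ls = L" using s0 by (auto simp: K_def Ls_def L_def)
  then have "measure lebesgue L = measure lebesgue K + measure lebesgue Ls"
    using measure_Un3[of K lebesgue Ls] Lm negligible_imp_measure0[OF negI] by simp
  then have WK: "measure lebesgue K = (1 - s^2) * measure lebesgue L"
    using mLs by (simp add: algebra_simps)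
  have ratio: "measure lebesgue K / measure lebesgue L = r" using WK Vpos s2 by simp
  have iK: "(\<lambda>x. x \<bullet> perp_dir u) ` K = {-1..-s}"
  proof
    show "(\<lambda>x. x \<bullet> perp_dir u) ` K \<subseteq> {-1..-s}" by (auto simp: ip K_def)
    show "{-1..-s} \<subseteq> (\<lambda>x. x \<bullet> perp_dir u) ` K"
    proof
      fix t :: real assume t: "t \<in> {-1..-s}"
      have "(vector [-t, 0] :: real^2) \<in> K" using t s0 by (simp add: K_def)
      moreover have "t = (vector [-t, 0] :: real^2) \<bullet> perp_dir u" by (simp add: ip)
      ultimately show "t \<in> (\<lambda>x. x \<bullet> perp_dir u) ` K" by blast
    qed
  qed
  have iL: "(\<lambda>x. x \<bullet> perp_dir u) ` L = {-1..0}"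
  proof
    show "(\<lambda>x. x \<bullet> perp_dir u) ` L \<subseteq> {-1..0}" by (auto simp: ip L_def)
    show "{-1..0} \<subseteq> (\<lambda>x. x \<bullet> perp_dir u) ` L"
    proof
      fix t :: real assume t: "t \<in> {-1..0}"
      have "(vector [-t, 0] :: real^2) \<in> L" using t by (simp add: L_def)
      moreover have "t = (vector [-t, 0] :: real^2) \<bullet> perp_dir u" by (simp add: ip)
      ultimately show "t \<in> (\<lambda>x. x \<bullet> perp_dir u) ` L" by blast
    qed
  qed
  have "line_vol u (proj_perp u ` K) / line_vol u (proj_perp u ` L) = 1 - s"
    using s0 by (simp add: line_vol_img[OF u] iK iL)
  then show ?thesis using ratio cK cL KL Vpos u by (intro exI[of _ K] exI[of _ L] exI[of _ u]) (simp add: s_def)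
qed
theorem proposition10:
  shows "(\<forall>(K::(real^2) set) L u.
            convex K \<and> compact K \<and> convex L \<and> compact L \<and> K \<subseteq> L \<and>
            measure lebesgue L > 0 \<and> norm u = 1 \<longrightarrow>
            line_vol u (proj_perp u ` K) / line_vol u (proj_perp u ` L)
              \<ge> 1 - sqrt (1 - measure lebesgue K / measure lebesgue L))
       \<and> (\<forall>r::real. 0 \<le> r \<and> r \<le> 1 \<longrightarrow>
            (\<exists>(K::(real^2) set) L u.
               convex K \<and> compact K \<and> convex L \<and> compact L \<and> K \<subseteq> L \<and>
               measure lebesgue L > 0 \<and> norm u = 1 \<and>
               measure lebesgue K / measure lebesgue L = r \<and>
               line_vol u (proj_perp u ` K) / line_vol u (proj_perp u ` L)
                 = 1 - sqrt (1 - measure lebesgue K / measure lebesgue L)))"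
  using part1 part2 by blast

end
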